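(* There is a constant $B_0<\infty$ such that $\sup_{n\in\mathbb N}\left(\sqrt n\,\mathbb E|nM_n-2|\right)\le B_0$.
   Context: Kakutani's interval-splitting process: let $U_1,U_2,\dots$ be i.i.d. uniform random variables on $[0,1]$. At time $0$ the partition of $[0,1]$ consists of the single interval $[0,1]$. Given the partition at time $n\in\mathbb Z_+$ (which consists of $n+1$ intervals, whose lengths are a.s. distinct), let $[a,b]$ be the interval of maximal length; the partition at time $n+1$ is obtained by replacing $[a,b]$ by the two intervals $[a,a+U_{n+1}(b-a)]$ and $[a+U_{n+1}(b-a),b]$. $M_n$ is the maximal interval length at time $n$. *)

theory Defs
  imports "HOL-Probability.Probability"
begin

text \<open>Only the lengths of the intervals
matter for the maximal length; we keep the list of interval lengths.  Going from time n to n+1, the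
interval of maximal length L is replaced by two intervals of lengths U_{n+1} L and
(1 - U_{n+1}) L.  (If several intervals have maximal length -- a null event -- the
resulting multiset of lengths does not depend on which one is split.)
The sequence u :: nat => real represents U_1, U_2, ... as u 1, u 2, ...; u 0 is unused.\<close>

fun kak_lengths :: "(nat \<Rightarrow> real) \<Rightarrow> nat \<Rightarrow> real list" where
  "kak_lengths u 0 = [1]"
| "kak_lengths u (Suc n) =
     (let ls = kak_lengths u n; L = Max (set ls)
      in remove1 L ls @ [u (Suc n) * L, (1 - u (Suc n)) * L])"

definition kak_max :: "nat \<Rightarrow> (nat \<Rightarrow> real) \<Rightarrow> real" where
  "kak_max n u = Max (set (kak_lengths u n))"

definition kak_space :: "(nat \<Rightarrow> real) measure" where
  "kak_space = PiM UNIV (\<lambda>_. uniform_measure lborel {0..1::real})"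

end

theory Submission
  imports Defs "HOL-Analysis.Harmonic_Numbers"
begin

lemma kak_len: "length (kak_lengths u n) = Suc n"
proof (induction n)
  case 0 then show ?case by simp
next
  case (Suc n)
  let ?ls = "kak_lengths u n"
  have "?ls \<noteq> []" using Suc by auto
  then have "Max (set ?ls) \<in> set ?ls" by (intro Max_in) auto
  then show ?case using Suc by (simp add: Let_def length_remove1)
qed

lemma kak_loc: "n < m \<Longrightarrow> kak_lengths (u(m:=w)) n = kak_lengths u n"
  by (induction n) (auto simp: Let_def)

definition good :: "(nat \<Rightarrow> real) \<Rightarrow> bool" where
  "good u \<longleftrightarrow> (\<forall>k. 0 \<le> u k \<and> u k \<le> 1)"

lemma kak_set_ne: "set (kak_lengths u n) \<noteq> {}"
  using kak_len[of u n] by (metis Zero_not_Suc length_0_conv set_empty)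

lemma kak_max_in: "kak_max n u \<in> set (kak_lengths u n)"
  unfolding kak_max_def using kak_set_ne by (intro Max_in) auto

lemma kak_le_max: "x \<in> set (kak_lengths u n) \<Longrightarrow> x \<le> kak_max n u"
  unfolding kak_max_def by simp

lemma kak_step: "kak_lengths u (Suc n) =
   remove1 (kak_max n u) (kak_lengths u n) @ [u (Suc n) * kak_max n u, (1 - u (Suc n)) * kak_max n u]"
  by (simp add: kak_max_def Let_def)

lemma kak_bounds: "good u \<Longrightarrow> x \<in> set (kak_lengths u n) \<Longrightarrow> 0 \<le> x \<and> x \<le> 1"
proof (induction n arbitrary: x)
  case 0 then show ?case by simp
next
  case (Suc n)
  have M: "0 \<le> kak_max n u \<and> kak_max n u \<le> 1" using Suc.IH[OF Suc.prems(1) kak_max_in] .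
  have u: "0 \<le> u (Suc n)" "u (Suc n) \<le> 1" using Suc.prems(1) unfolding good_def by auto
  from Suc.prems(2) consider "x \<in> set (kak_lengths u n)" | "x = u (Suc n) * kak_max n u"
     | "x = (1 - u (Suc n)) * kak_max n u"
    unfolding kak_step using set_remove1_subset by fastforce
  then show ?case
  proof cases
    case 1 then show ?thesis using Suc.IH[OF Suc.prems(1)] by blast
  next
    case 2 then show ?thesis using M u by (simp add: mult_le_one)
  next
    case 3 then show ?thesis using M u by (simp add: mult_le_one)
  qed
qed

lemma kak_max_bounds: "good u \<Longrightarrow> 0 \<le> kak_max n u \<and> kak_max n u \<le> 1"
  using kak_bounds kak_max_in by blast

lemma kak_max_Suc_le: "good u \<Longrightarrow> kak_max (Suc n) u \<le> kak_max n u"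
proof -
  assume g: "good u"
  have M: "0 \<le> kak_max n u" using kak_max_bounds[OF g] by blast
  have u: "0 \<le> u (Suc n)" "u (Suc n) \<le> 1" using g unfolding good_def by auto
  have "\<forall>x\<in>set (kak_lengths u (Suc n)). x \<le> kak_max n u"
    unfolding kak_step using M u
    using set_remove1_subset by (auto dest!: subsetD[OF set_remove1_subset] kak_le_max intro: mult_left_le_one_le simp: mult_left_le_one_le)
  then show ?thesis using kak_max_in[of "Suc n" u] by blast
qed

lemma kak_max_antimono: "good u \<Longrightarrow> k \<le> n \<Longrightarrow> kak_max n u \<le> kak_max k u"
proof (induction n)
  case 0 then show ?case by simp
next
  case (Suc n)
  then show ?case using kak_max_Suc_le[OF Suc.prems(1), of n] by (cases "k = Suc n") auto
qed

definition gg :: "real \<Rightarrow> real \<Rightarrow> real" where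
  "gg t L = (if t \<le> L then 2 * L / t - 1 else 0)"

definition GG :: "real \<Rightarrow> real list \<Rightarrow> real" where
  "GG t ls = sum_list (map (gg t) ls)"

definition phi :: "real \<Rightarrow> real \<Rightarrow> real \<Rightarrow> real" where
  "phi t L v = (if t \<le> L then 1 + gg t (v * L) + gg t ((1 - v) * L) - gg t L else 0)"

lemma sum_list_remove1': "x \<in> set xs \<Longrightarrow> sum_list (map f (remove1 x xs)) = sum_list (map f xs) - (f x :: real)"
  by (induction xs) auto

lemma gg_nonneg: "0 < t \<Longrightarrow> 0 \<le> gg t L"
  by (auto simp: gg_def field_simps)

lemma GG_nonneg: "0 < t \<Longrightarrow> 0 \<le> GG t ls"
  unfolding GG_def by (induction ls) (auto simp: gg_nonneg)

lemma GG_step: "good u \<Longrightarrow> 0 < t \<Longrightarrow>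
   (if t \<le> kak_max k u then 1 else 0) + GG t (kak_lengths u (Suc k)) - GG t (kak_lengths u k)
   = phi t (kak_max k u) (u (Suc k))"
proof -
  assume g: "good u" and t: "0 < t"
  let ?L = "kak_max k u" and ?v = "u (Suc k)"
  have v: "0 \<le> ?v" "?v \<le> 1" using g unfolding good_def by auto
  have L: "0 \<le> ?L" using kak_max_bounds[OF g] by blast
  have "GG t (kak_lengths u (Suc k)) = GG t (kak_lengths u k) - gg t ?L + gg t (?v * ?L) + gg t ((1 - ?v) * ?L)"
    unfolding kak_step GG_def using kak_max_in[of k u] by (simp add: sum_list_remove1')
  moreover have "\<not> t \<le> ?L \<Longrightarrow> gg t ?L = 0 \<and> gg t (?v * ?L) = 0 \<and> gg t ((1 - ?v) * ?L) = 0"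
  proof -
    assume "\<not> t \<le> ?L"
    moreover have "?v * ?L \<le> ?L" "(1 - ?v) * ?L \<le> ?L" using v L by (auto simp: mult_left_le_one_le)
    ultimately show ?thesis unfolding gg_def by auto
  qed
  ultimately show ?thesis unfolding phi_def by auto
qed

lemma phi_bound: "0 < t \<Longrightarrow> 0 \<le> v \<Longrightarrow> v \<le> 1 \<Longrightarrow> \<bar>phi t L v\<bar> \<le> 2"
proof -
  assume t: "0 < t" and v: "0 \<le> v" "v \<le> 1"
  show ?thesis
  proof (cases "t \<le> L")
    case False then show ?thesis by (simp add: phi_def)
  next
    case True
    have L: "0 < L" using t True by simp
    have a: "v * L + (1 - v) * L = L" by (simp add: algebra_simps)
    have e: "phi t L v = 1 + gg t (v * L) + gg t ((1 - v) * L) - (2 * L / t - 1)"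
      using True by (simp add: phi_def gg_def)
    have vL: "0 \<le> v * L" "0 \<le> (1 - v) * L" using v L by auto
    consider "t \<le> v * L" "t \<le> (1 - v) * L" | "\<not> t \<le> v * L" "t \<le> (1 - v) * L"
      | "t \<le> v * L" "\<not> t \<le> (1 - v) * L" | "\<not> t \<le> v * L" "\<not> t \<le> (1 - v) * L" by blast
    then show ?thesis
    proof cases
      case 1
      then have "phi t L v = 2 * (v * L + (1 - v) * L) / t - 2 * L / t"
        unfolding e gg_def using t by (simp add: field_simps)
      then show ?thesis using a by simp
    next
      case 2
      then have "phi t L v = 1 + 2 * ((1 - v) * L) / t - 2 * L / t"
        unfolding e gg_def using t by (simp add: field_simps)
      also have "\<dots> = 1 - 2 * (v * L) / t" using a t by (simp add: field_simps)
      finally have "phi t L v = 1 - 2 * (v * L) / t" .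
      moreover have "2 * (v * L) / t \<le> 2" using 2 t by (simp add: field_simps)
      moreover have "0 \<le> 2 * (v * L) / t" using vL t by simp
      ultimately show ?thesis by linarith
    next
      case 3
      then have "phi t L v = 1 + 2 * (v * L) / t - 2 * L / t"
        unfolding e gg_def using t by (simp add: field_simps)
      also have "\<dots> = 1 - 2 * ((1 - v) * L) / t" using a t by (simp add: field_simps)
      finally have "phi t L v = 1 - 2 * ((1 - v) * L) / t" .
      moreover have "2 * ((1 - v) * L) / t \<le> 2" using 3 t by (simp add: field_simps)
      moreover have "0 \<le> 2 * ((1 - v) * L) / t" using vL t by simp
      ultimately show ?thesis by linarith
    next
      case 4
      then have "phi t L v = 2 - 2 * L / t"
        unfolding e gg_def using t by (simp add: field_simps)
      moreover have "L < 2 * t" using 4 a by linarith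
      moreover have "2 * L / t \<ge> 2" using True t by (simp add: field_simps)
      moreover have "2 * L / t < 4" using \<open>L < 2 * t\<close> t by (simp add: field_simps)
      ultimately show ?thesis by linarith
    qed
  qed
qed

lemma int_gg1:
  assumes t: "0 < t" and tL: "t \<le> L"
  shows "((\<lambda>v. gg t (v * L)) has_integral (L / t - 1)) {0..1}"
proof -
  define a where "a = t / L"
  have L: "0 < L" using t tL by simp
  have a0: "0 < a" and a1: "a \<le> 1" using t L tL by (auto simp: a_def field_simps)
  have p1: "((\<lambda>v. gg t (v * L)) has_integral 0) {0..a}"
  proof (rule has_integral_spike_finite[where S="{a}" and f="\<lambda>_. 0"])
    fix v assume "v \<in> {0..a} - {a}"
    then have "v < a" by auto
    then have "v * L < t" using L by (simp add: a_def field_simps)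
    then show "gg t (v * L) = 0" by (simp add: gg_def)
  qed (auto intro: has_integral_0)
  have d: "((\<lambda>v. v^2 * L / t - v) has_vector_derivative (2 * v * L / t - 1)) (at v within {a..1})" for v
    unfolding has_real_derivative_iff_has_vector_derivative[symmetric] using t by (auto intro!: derivative_eq_intros simp: field_simps power2_eq_square)
  have "((\<lambda>v. 2 * v * L / t - 1) has_integral ((1^2 * L / t - 1) - (a^2 * L / t - a))) {a..1}"
    by (rule fundamental_theorem_of_calculus[OF a1 d])
  moreover have "(1^2 * L / t - 1) - (a^2 * L / t - a) = L / t - 1"
    using t L by (simp add: a_def power2_eq_square field_simps)
  ultimately have "((\<lambda>v. 2 * v * L / t - 1) has_integral (L / t - 1)) {a..1}" by simp
  moreover have "\<And>v. v \<in> {a..1} - {} \<Longrightarrow> gg t (v * L) = 2 * v * L / t - 1"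
  proof -
    fix v assume "v \<in> {a..1} - {}"
    then have "a \<le> v" by auto
    then have "t \<le> v * L" using L by (simp add: a_def field_simps)
    then show "gg t (v * L) = 2 * v * L / t - 1" by (simp add: gg_def)
  qed
  ultimately have p2: "((\<lambda>v. gg t (v * L)) has_integral (L / t - 1)) {a..1}"
    using has_integral_spike_finite_eq[of "{}" "{a..1}" "\<lambda>v. gg t (v * L)" "\<lambda>v. 2 * v * L / t - 1"] by simp
  show ?thesis using has_integral_combine[OF less_imp_le[OF a0] a1 p1 p2] by simp
qed

lemma int_gg2:
  assumes t: "0 < t" and tL: "t \<le> L"
  shows "((\<lambda>v. gg t ((1 - v) * L)) has_integral (L / t - 1)) {0..1}"
proof -
  define a where "a = t / L"
  define b where "b = 1 - a"
  have L: "0 < L" using t tL by simp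
  have a0: "0 < a" and a1: "a \<le> 1" using t L tL by (auto simp: a_def field_simps)
  have b0: "0 \<le> b" and b1: "b \<le> 1" using a0 a1 by (auto simp: b_def)
  have p2: "((\<lambda>v. gg t ((1 - v) * L)) has_integral 0) {b..1}"
  proof (rule has_integral_spike_finite[where S="{b}" and f="\<lambda>_. 0"])
    fix v assume "v \<in> {b..1} - {b}"
    then have "b < v" by auto
    then have "(1 - v) * L < t" using L by (simp add: b_def a_def field_simps)
    then show "gg t ((1 - v) * L) = 0" by (simp add: gg_def)
  qed (auto intro: has_integral_0)
  have d: "((\<lambda>v. - ((1 - v)^2 * L / t) - v) has_vector_derivative (2 * (1 - v) * L / t - 1)) (at v within {0..b})" for v
    unfolding has_real_derivative_iff_has_vector_derivative[symmetric] using t by (auto intro!: derivative_eq_intros simp: field_simps power2_eq_square)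
  have "((\<lambda>v. 2 * (1 - v) * L / t - 1) has_integral ((- ((1 - b)^2 * L / t) - b) - (- ((1 - 0)^2 * L / t) - 0))) {0..b}"
    by (rule fundamental_theorem_of_calculus[OF b0 d])
  moreover have "(- ((1 - b)^2 * L / t) - b) - (- ((1 - 0)^2 * L / t) - 0) = L / t - 1"
    using t L by (simp add: b_def a_def power2_eq_square field_simps)
  ultimately have "((\<lambda>v. 2 * (1 - v) * L / t - 1) has_integral (L / t - 1)) {0..b}" by simp
  moreover have "\<And>v. v \<in> {0..b} - {} \<Longrightarrow> gg t ((1 - v) * L) = 2 * (1 - v) * L / t - 1"
  proof -
    fix v assume "v \<in> {0..b} - {}"
    then have "v \<le> b" by auto
    then have "t \<le> (1 - v) * L" using L by (simp add: b_def a_def field_simps)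
    then show "gg t ((1 - v) * L) = 2 * (1 - v) * L / t - 1" by (simp add: gg_def)
  qed
  ultimately have p1: "((\<lambda>v. gg t ((1 - v) * L)) has_integral (L / t - 1)) {0..b}"
    using has_integral_spike_finite_eq[of "{}" "{0..b}" "\<lambda>v. gg t ((1 - v) * L)" "\<lambda>v. 2 * (1 - v) * L / t - 1"] by simp
  show ?thesis using has_integral_combine[OF b0 b1 p1 p2] by simp
qed

lemma int_phi:
  assumes t: "0 < t"
  shows "((\<lambda>v. phi t L v) has_integral 0) {0..1}"
proof (cases "t \<le> L")
  case False
  then show ?thesis by (simp add: phi_def has_integral_0)
next
  case True
  have c1: "((\<lambda>v. 1) has_integral (1::real)) {0..1::real}"
    using has_integral_const_real[of "1::real" 0 1] by simp
  have c2: "((\<lambda>v. gg t L) has_integral gg t L) {0..1::real}"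
    using has_integral_const_real[of "gg t L" 0 1] by simp
  have "((\<lambda>v. 1 + gg t (v * L) + gg t ((1 - v) * L) - gg t L) has_integral
          (1 + (L / t - 1) + (L / t - 1) - gg t L)) {0..1}"
    by (intro has_integral_diff has_integral_add c1 c2 int_gg1 int_gg2 t True)
  moreover have "1 + (L / t - 1) + (L / t - 1) - gg t L = 0"
    using True t by (simp add: gg_def field_simps)
  ultimately show ?thesis using True by (simp add: phi_def)
qed

definition clamp01 :: "real \<Rightarrow> real" where "clamp01 v = max 0 (min 1 v)"

lemma clamp01_id: "v \<in> {0..1} \<Longrightarrow> clamp01 v = v" by (auto simp: clamp01_def)
lemma clamp01_bounds: "0 \<le> clamp01 v" "clamp01 v \<le> 1" by (auto simp: clamp01_def)

abbreviation unif :: "real measure" where "unif \<equiv> uniform_measure lborel {0..1::real}"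

lemma unif_density: "unif = density lborel (\<lambda>x. ennreal (indicator {0..1::real} x))"
  unfolding uniform_measure_def by (simp add: ennreal_indicator divide_ennreal_def)

lemma prob_space_unif: "prob_space unif"
  by (rule prob_space_uniform_measure) auto

lemma sets_unif[simp, measurable_cong]: "sets unif = sets borel"
  by simp

lemma integral_unif:
  fixes f :: "real \<Rightarrow> real"
  assumes f[measurable]: "f \<in> borel_measurable borel" and B: "\<And>x. \<bar>f x\<bar> \<le> B"
  shows "integral\<^sup>L unif f = integral {0..1} f"
proof -
  have "integral\<^sup>L unif f = integral\<^sup>L lborel (\<lambda>x. indicator {0..1::real} x *\<^sub>R f x)"
    unfolding unif_density by (subst integral_density) auto
  also have "\<dots> = (LINT x : {0..1} | lborel. f x)" by (simp add: set_lebesgue_integral_def)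
  also have "\<dots> = integral {0..1} f"
  proof (rule set_borel_integral_eq_integral(2))
    show "set_integrable lborel {0..1} f" unfolding set_integrable_def
      by (rule integrableI_bounded_set[where A="{0..1}" and B=B]) (auto simp: B indicator_def)
  qed
  finally show ?thesis .
qed

lemma phi_meas[measurable]: "(\<lambda>v. phi t L v) \<in> borel_measurable borel"
  unfolding phi_def gg_def by measurable

lemma clamp_meas[measurable]: "clamp01 \<in> borel_measurable borel"
  unfolding clamp01_def by measurable

lemma integral_phi: "0 < t \<Longrightarrow> (\<integral>v. phi t L (clamp01 v) \<partial>unif) = 0"
proof -
  assume t: "0 < t"
  have "(\<integral>v. phi t L (clamp01 v) \<partial>unif) = integral {0..1} (\<lambda>v. phi t L (clamp01 v))"
    by (rule integral_unif[where B=2]) (auto intro!: phi_bound t clamp01_bounds)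
  also have "\<dots> = integral {0..1} (\<lambda>v. phi t L v)"
    by (rule integral_cong) (simp add: clamp01_id)
  also have "\<dots> = 0" using int_phi[OF t] by (rule integral_unique)
  finally show ?thesis .
qed

lemma prob_space_kak: "prob_space kak_space"
  unfolding kak_space_def by (rule prob_space_PiM) (rule prob_space_unif)

lemma meas_unif_borel: "measurable M unif = measurable M borel"
  by (rule measurable_cong_sets) simp_all

lemma coord_meas_unif: "(\<lambda>u. u i) \<in> measurable kak_space unif"
  unfolding kak_space_def by (rule measurable_component_singleton) simp

lemma coord_meas[measurable]: "(\<lambda>u. u i) \<in> borel_measurable kak_space"
  using coord_meas_unif[of i] unfolding meas_unif_borel .

lemma AE_good: "AE u in kak_space. good u"
proof -
  have "AE u in kak_space. \<forall>k. u k \<in> {0..1}"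
  proof (subst AE_all_countable, intro allI)
    fix k
    have "AE x in unif. x \<in> {0..1}"
      by (rule AE_uniform_measureI) auto
    then show "AE u in kak_space. u k \<in> {0..1}"
      unfolding kak_space_def
      by (rule AE_PiM_component[rotated 2]) (auto intro: prob_space_unif)
  qed
  then show ?thesis by eventually_elim (auto simp: good_def)
qed


lemma indep_step:
  fixes H :: "(nat \<Rightarrow> real) \<Rightarrow> real \<Rightarrow> real"
  assumes Hm: "(\<lambda>(x, X). H X x) \<in> borel_measurable (unif \<Otimes>\<^sub>M kak_space)"
    and B: "\<And>X x. \<bar>H X x\<bar> \<le> B"
    and loc: "\<And>X x z. H (X(m:=z)) x = H X x"
  shows "(\<integral>X. H X (X m) \<partial>kak_space) = (\<integral>X. (\<integral>x. H X x \<partial>unif) \<partial>kak_space)"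
proof -
  interpret U: prob_space unif by (rule prob_space_unif)
  interpret P: prob_space kak_space by (rule prob_space_kak)
  interpret UP: pair_prob_space unif kak_space ..
  have D: "distr (unif \<Otimes>\<^sub>M kak_space) kak_space (\<lambda>(x, X). X(m := x)) = kak_space"
    using distr_pair_PiM_eq_PiM[of UNIV "\<lambda>_. unif" m] prob_space_unif
    by (simp add: kak_space_def)
  have T: "(\<lambda>(x, X). X(m := x)) \<in> measurable (unif \<Otimes>\<^sub>M kak_space) kak_space"
  proof -
    have "(\<lambda>p. (snd p)(m := fst p)) \<in> measurable (unif \<Otimes>\<^sub>M kak_space) (PiM UNIV (\<lambda>_. unif))"
    proof (rule measurable_fun_upd[where J=UNIV])
      show "snd \<in> measurable (unif \<Otimes>\<^sub>M kak_space) (Pi\<^sub>M UNIV (\<lambda>_. unif))"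
        unfolding kak_space_def by (rule measurable_snd)
      show "fst \<in> measurable (unif \<Otimes>\<^sub>M kak_space) unif" by (rule measurable_fst)
    qed simp
    then show ?thesis by (simp add: kak_space_def split_beta')
  qed
  have Pm: "(\<lambda>X. (X m, X)) \<in> measurable kak_space (unif \<Otimes>\<^sub>M kak_space)"
    by (intro measurable_Pair coord_meas_unif) simp
  have Hm2: "(\<lambda>X. H X (X m)) \<in> borel_measurable kak_space"
    using measurable_comp[OF Pm Hm] by (simp add: comp_def)
  have "(\<integral>X. H X (X m) \<partial>kak_space) = (\<integral>X. H X (X m) \<partial>distr (unif \<Otimes>\<^sub>M kak_space) kak_space (\<lambda>(x, X). X(m := x)))"
    by (simp only: D)
  also have "\<dots> = (\<integral>p. (\<lambda>X. H X (X m)) ((\<lambda>(x, X). X(m := x)) p) \<partial>(unif \<Otimes>\<^sub>M kak_space))"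
    by (rule integral_distr[OF T Hm2])
  also have "\<dots> = (\<integral>p. (\<lambda>(x, X). H X x) p \<partial>(unif \<Otimes>\<^sub>M kak_space))"
    by (rule Bochner_Integration.integral_cong) (auto simp: loc split: prod.splits)
  also have "\<dots> = (\<integral>X. (\<integral>x. H X x \<partial>unif) \<partial>kak_space)"
  proof (rule UP.integral_snd[symmetric, of "\<lambda>x X. H X x"])
    have "AE p in unif \<Otimes>\<^sub>M kak_space. norm ((\<lambda>(x, X). H X x) p) \<le> B"
      by (intro AE_I2) (simp add: B split_beta')
    then show "integrable (unif \<Otimes>\<^sub>M kak_space) (\<lambda>(x, X). H X x)"
      by (rule UP.integrable_const_bound[OF _ Hm])
  qed
  finally show ?thesis .
qed

lemma remove1_nth:
  "x \<in> set xs \<Longrightarrow> Suc i < length xs \<Longrightarrow>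
   remove1 x xs ! i = (if \<exists>j\<in>{..i}. xs ! j = x then xs ! Suc i else xs ! i)"
proof (induction xs arbitrary: i)
  case Nil then show ?case by simp
next
  case (Cons y ys)
  show ?case
  proof (cases "y = x")
    case True
    have "\<exists>j\<in>{..i}. (y # ys) ! j = x" using True by (intro bexI[of _ 0]) auto
    then show ?thesis using True by simp
  next
    case False
    then have xin: "x \<in> set ys" using Cons.prems by simp
    show ?thesis
    proof (cases i)
      case 0 then show ?thesis using False by auto
    next
      case (Suc i')
      have "(\<exists>j\<in>{..i}. (y # ys) ! j = x) \<longleftrightarrow> (\<exists>j\<in>{..i'}. ys ! j = x)"
      proof
        assume "\<exists>j\<in>{..i}. (y # ys) ! j = x"
        then obtain j where j: "j \<le> i" "(y # ys) ! j = x" by auto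
        then obtain j' where "j = Suc j'" using False by (cases j) auto
        then show "\<exists>j\<in>{..i'}. ys ! j = x" using j Suc by auto
      next
        assume "\<exists>j\<in>{..i'}. ys ! j = x"
        then obtain j where j: "j \<le> i'" "ys ! j = x" by auto
        then show "\<exists>j\<in>{..i}. (y # ys) ! j = x" using Suc by (intro bexI[of _ "Suc j"]) auto
      qed
      then show ?thesis using Cons.IH[OF xin, of i'] Cons.prems Suc False by auto
    qed
  qed
qed

definition ell :: "nat \<Rightarrow> nat \<Rightarrow> (nat \<Rightarrow> real) \<Rightarrow> real" where
  "ell n i u = (if i \<le> n then kak_lengths u n ! i else 0)"

lemma set_kak_ell: "set (kak_lengths u n) = (\<lambda>j. ell n j u) ` {..n}"
  unfolding ell_def using kak_len[of u n]
  by (auto simp: set_conv_nth image_def less_Suc_eq_le)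

lemma kak_max_ell: "kak_max n u = (MAX j\<in>{..n}. ell n j u)"
  unfolding kak_max_def set_kak_ell ..

lemma ell_Suc: "ell (Suc n) i u =
  (if i < n then (if \<exists>j\<in>{..i}. ell n j u = kak_max n u then ell n (Suc i) u else ell n i u)
   else if i = n then u (Suc n) * kak_max n u
   else if i = Suc n then (1 - u (Suc n)) * kak_max n u else 0)"
proof -
  let ?ls = "kak_lengths u n"
  have len: "length ?ls = Suc n" by (rule kak_len)
  have lr: "length (remove1 (kak_max n u) ?ls) = n"
    using kak_max_in[of n u] len by (simp add: length_remove1)
  show ?thesis
  proof (cases "i < n")
    case True
    have "(\<exists>j\<in>{..i}. ell n j u = kak_max n u) = (\<exists>j\<in>{..i}. ?ls ! j = kak_max n u)"
      using True by (auto simp: ell_def)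
    then show ?thesis using True remove1_nth[OF kak_max_in[of n u], of i] len lr
      by (simp add: ell_def kak_step nth_append del: kak_lengths.simps)
  next
    case False
    then show ?thesis using lr by (auto simp: ell_def kak_step nth_append simp del: kak_lengths.simps)
  qed
qed

lemma ell_meas[measurable]: "ell n i \<in> borel_measurable kak_space"
proof (induction n arbitrary: i)
  case 0
  show ?case by (cases "i = 0") (simp_all add: ell_def)
next
  case (Suc n)
  have IH[measurable]: "ell n j \<in> borel_measurable kak_space" for j by (rule Suc.IH)
  have M[measurable]: "kak_max n \<in> borel_measurable kak_space"
    unfolding kak_max_ell by measurable
  have P0[measurable]: "Measurable.pred kak_space (\<lambda>x. ell n j x = kak_max n x)" for j
    unfolding pred_def by (rule measurable_equality_set) measurable
  have P1: "Measurable.pred kak_space (\<lambda>x. \<exists>j\<in>{..i}. ell n j x = kak_max n x)" by measurable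
  have P2: "(\<lambda>x. if i = n then x (Suc n) * kak_max n x
          else if i = Suc n then (1 - x (Suc n)) * kak_max n x else 0) \<in> borel_measurable kak_space" by measurable
  show ?case unfolding ell_Suc[abs_def] by measurable
qed

lemma kak_max_meas[measurable]: "(\<lambda>u. kak_max n u) \<in> borel_measurable kak_space"
  unfolding kak_max_ell by measurable

lemma GG_ell: "GG t (kak_lengths u n) = (\<Sum>j\<le>n. gg t (ell n j u))"
proof -
  have "GG t (kak_lengths u n) = (\<Sum>j<Suc n. gg t (kak_lengths u n ! j))"
    unfolding GG_def using kak_len[of u n] by (simp add: sum_list_sum_nth atLeast0LessThan)
  also have "\<dots> = (\<Sum>j\<le>n. gg t (ell n j u))"
    by (rule sum.cong) (auto simp: ell_def)
  finally show ?thesis .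
qed

lemma gg_meas[measurable]: "gg t \<in> borel_measurable borel"
  unfolding gg_def by measurable

lemma GG_meas[measurable]: "(\<lambda>u. GG t (kak_lengths u n)) \<in> borel_measurable kak_space"
  unfolding GG_ell by measurable

definition AA :: "real \<Rightarrow> nat \<Rightarrow> (nat \<Rightarrow> real) \<Rightarrow> real" where
  "AA t k u = (\<Sum>j<k. if t \<le> kak_max j u then 1 else 0)"

definition YY :: "real \<Rightarrow> nat \<Rightarrow> (nat \<Rightarrow> real) \<Rightarrow> real" where
  "YY t k u = AA t k u + GG t (kak_lengths u k)"

lemma AA_meas[measurable]: "AA t k \<in> borel_measurable kak_space"
  unfolding AA_def[abs_def] by measurable

lemma YY_meas[measurable]: "YY t k \<in> borel_measurable kak_space"
  unfolding YY_def[abs_def] by measurable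

lemma YY_0: "YY t 0 u = gg t 1"
  by (simp add: YY_def AA_def GG_def)

lemma AA_Suc: "AA t (Suc k) u = AA t k u + (if t \<le> kak_max k u then 1 else 0)"
  by (simp add: AA_def)

lemma YY_step: "good u \<Longrightarrow> 0 < t \<Longrightarrow> YY t (Suc k) u = YY t k u + phi t (kak_max k u) (u (Suc k))"
  using GG_step[of u t k] by (simp add: YY_def AA_Suc)

lemma AA_bounds: "0 \<le> AA t k u \<and> AA t k u \<le> real k"
proof -
  have "AA t k u \<le> (\<Sum>j<k. 1)" unfolding AA_def by (rule sum_mono) auto
  moreover have "0 \<le> AA t k u" unfolding AA_def by (rule sum_nonneg) auto
  ultimately show ?thesis by simp
qed

lemma gg_le: "0 < t \<Longrightarrow> L \<le> 1 \<Longrightarrow> gg t L \<le> 2 / t"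
proof -
  assume t: "0 < t" and L: "L \<le> 1"
  have "2 * L / t \<le> 2 / t" using L t by (intro divide_right_mono) auto
  moreover have "0 \<le> 2 / t" using t by simp
  ultimately show ?thesis unfolding gg_def by auto
qed

lemma GG_bounds: "good u \<Longrightarrow> 0 < t \<Longrightarrow> 0 \<le> GG t (kak_lengths u k) \<and> GG t (kak_lengths u k) \<le> (real k + 1) * (2 / t)"
proof -
  assume g: "good u" and t: "0 < t"
  have "GG t (kak_lengths u k) \<le> (\<Sum>j\<le>k. 2 / t)" unfolding GG_ell
  proof (rule sum_mono)
    fix j assume "j \<in> {..k}"
    then have "ell k j u \<in> set (kak_lengths u k)" unfolding set_kak_ell by auto
    then have "ell k j u \<le> 1" using kak_bounds[OF g] by blast
    then show "gg t (ell k j u) \<le> 2 / t" by (rule gg_le[OF t])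
  qed
  moreover have "(\<Sum>j\<le>k. 2 / t) = (real k + 1) * (2 / t)" by simp
  ultimately show ?thesis using GG_nonneg[OF t, of "kak_lengths u k"] by linarith
qed

lemma YY_bound: "good u \<Longrightarrow> 0 < t \<Longrightarrow> \<bar>YY t k u\<bar> \<le> real k + (real k + 1) * (2 / t)"
  using AA_bounds[of t k u] GG_bounds[of u t k] unfolding YY_def by auto

lemma kak_max_loc: "k < m \<Longrightarrow> kak_max k (X(m := z)) = kak_max k X"
  unfolding kak_max_def by (simp add: kak_loc)

lemma AA_loc: "k < m \<Longrightarrow> AA t k (X(m := z)) = AA t k X"
  unfolding AA_def by (rule sum.cong) (auto simp: kak_max_loc)

lemma YY_loc: "k < m \<Longrightarrow> YY t k (X(m := z)) = YY t k X"
  unfolding YY_def by (simp add: AA_loc kak_loc)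

lemma integrable_bdd:
  fixes B :: real
  assumes "f \<in> borel_measurable kak_space" "AE u in kak_space. \<bar>f u\<bar> \<le> B"
  shows "integrable kak_space f"
proof -
  interpret P: prob_space kak_space by (rule prob_space_kak)
  show ?thesis using assms by (intro P.integrable_const_bound[where B=B]) auto
qed

lemma YY_integrable: "0 < t \<Longrightarrow> integrable kak_space (YY t k)"
proof (rule integrable_bdd[where B="real k + (real k + 1) * (2 / t)"])
  assume t: "0 < t"
  show "AE u in kak_space. \<bar>YY t k u\<bar> \<le> real k + (real k + 1) * (2 / t)"
    using AE_good by eventually_elim (rule YY_bound[OF _ t])
qed simp

lemma indep_phi:
  fixes F :: "(nat \<Rightarrow> real) \<Rightarrow> real"
  assumes t: "0 < t"
    and F[measurable]: "F \<in> borel_measurable kak_space"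
    and FB: "\<And>X. \<bar>F X\<bar> \<le> B"
    and Floc: "\<And>X z. F (X(Suc k := z)) = F X"
  shows "(\<integral>X. F X * phi t (kak_max k X) (clamp01 (X (Suc k))) \<partial>kak_space) = 0"
proof -
  have "(\<integral>X. F X * phi t (kak_max k X) (clamp01 (X (Suc k))) \<partial>kak_space)
      = (\<integral>X. (\<integral>x. F X * phi t (kak_max k X) (clamp01 x) \<partial>unif) \<partial>kak_space)"
  proof (rule indep_step[where H="\<lambda>X x. F X * phi t (kak_max k X) (clamp01 x)" and B="B * 2"])
    show "(\<lambda>(x, X). F X * phi t (kak_max k X) (clamp01 x)) \<in> borel_measurable (unif \<Otimes>\<^sub>M kak_space)"
    proof -
      have m1: "(\<lambda>p. F (snd p)) \<in> borel_measurable (unif \<Otimes>\<^sub>M kak_space)" by measurable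
      have m2: "(\<lambda>p. kak_max k (snd p)) \<in> borel_measurable (unif \<Otimes>\<^sub>M kak_space)" by measurable
      have m3: "(\<lambda>p. clamp01 (fst p)) \<in> borel_measurable (unif \<Otimes>\<^sub>M kak_space)"
      proof -
        have "fst \<in> measurable (unif \<Otimes>\<^sub>M kak_space) unif" by (rule measurable_fst)
        then have "fst \<in> borel_measurable (unif \<Otimes>\<^sub>M kak_space)" unfolding meas_unif_borel .
        then show ?thesis by measurable
      qed
      have "(\<lambda>p. F (snd p) * phi t (kak_max k (snd p)) (clamp01 (fst p))) \<in> borel_measurable (unif \<Otimes>\<^sub>M kak_space)"
        using m1 m2 m3 unfolding phi_def gg_def by measurable
      then show ?thesis by (simp add: split_beta')
    qed
    show "\<bar>F X * phi t (kak_max k X) (clamp01 x)\<bar> \<le> B * 2" for X x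
    proof -
      have "\<bar>phi t (kak_max k X) (clamp01 x)\<bar> \<le> 2" by (rule phi_bound[OF t clamp01_bounds])
      then show ?thesis unfolding abs_mult using FB[of X] by (intro mult_mono) auto
    qed
    show "F (X(Suc k := z)) * phi t (kak_max k (X(Suc k := z))) (clamp01 x) = F X * phi t (kak_max k X) (clamp01 x)" for X x z
      by (simp add: Floc kak_max_loc)
  qed
  also have "\<dots> = (\<integral>X. F X * (\<integral>x. phi t (kak_max k X) (clamp01 x) \<partial>unif) \<partial>kak_space)"
    by simp
  also have "\<dots> = 0" by (simp add: integral_phi[OF t])
  finally show ?thesis .
qed

abbreviation Dk :: "real \<Rightarrow> nat \<Rightarrow> (nat \<Rightarrow> real) \<Rightarrow> real" where
  "Dk t k u \<equiv> phi t (kak_max k u) (clamp01 (u (Suc k)))"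

lemma Dk_meas[measurable]: "(\<lambda>u. Dk t k u) \<in> borel_measurable kak_space"
  unfolding phi_def gg_def by measurable

lemma Dk_bound: "0 < t \<Longrightarrow> \<bar>Dk t k u\<bar> \<le> 2"
  by (rule phi_bound) (auto simp: clamp01_bounds)

lemma Dk_sq: "0 < t \<Longrightarrow> (Dk t k u)\<^sup>2 \<le> 4 * (if t \<le> kak_max k u then 1 else 0)"
proof -
  assume t: "0 < t"
  have "\<bar>Dk t k u\<bar> \<le> 2" by (rule Dk_bound[OF t])
  then have "(Dk t k u)\<^sup>2 \<le> 2\<^sup>2" by (metis abs_ge_zero power2_abs power_mono)
  then show ?thesis by (auto simp: phi_def)
qed

lemma Dk_integrable: "0 < t \<Longrightarrow> integrable kak_space (\<lambda>u. Dk t k u)"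
  by (rule integrable_bdd[where B=2]) (auto intro!: AE_I2 Dk_bound)

lemma YY_step_AE: "0 < t \<Longrightarrow> AE u in kak_space. YY t (Suc k) u = YY t k u + Dk t k u"
  using AE_good by eventually_elim (auto simp: YY_step clamp01_id good_def)

lemma EY: "0 < t \<Longrightarrow> (\<integral>u. YY t n u \<partial>kak_space) = gg t 1"
proof (induction n)
  case 0 then show ?case
    using prob_space.prob_space[OF prob_space_kak] by (simp add: YY_0)
next
  case (Suc k)
  have t: "0 < t" by fact
  have "(\<integral>u. YY t (Suc k) u \<partial>kak_space) = (\<integral>u. YY t k u + Dk t k u \<partial>kak_space)"
    by (rule integral_cong_AE) (auto simp: YY_step_AE[OF t])
  also have "\<dots> = (\<integral>u. YY t k u \<partial>kak_space) + (\<integral>u. Dk t k u \<partial>kak_space)"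
    by (rule Bochner_Integration.integral_add[OF YY_integrable[OF t] Dk_integrable[OF t]])
  also have "(\<integral>u. Dk t k u \<partial>kak_space) = (\<integral>u. 1 * Dk t k u \<partial>kak_space)" by simp
  also have "\<dots> = 0" by (rule indep_phi[OF t, where B=1]) auto
  finally show ?case using Suc by simp
qed

definition clampK :: "real \<Rightarrow> real \<Rightarrow> real" where "clampK K y = max (- K) (min K y)"

lemma clampK_meas[measurable]: "clampK K \<in> borel_measurable borel"
  unfolding clampK_def by measurable

lemma clampK_id: "\<bar>y\<bar> \<le> K \<Longrightarrow> clampK K y = y"
  by (auto simp: clampK_def)

lemma clampK_bound: "0 \<le> K \<Longrightarrow> \<bar>clampK K y\<bar> \<le> K"
  by (auto simp: clampK_def)

lemma VAR: "0 < t \<Longrightarrow> (\<integral>u. (YY t n u - gg t 1)\<^sup>2 \<partial>kak_space) \<le> 4 * (\<integral>u. AA t n u \<partial>kak_space)"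
proof (induction n)
  case 0 then show ?case by (simp add: YY_0 AA_def)
next
  case (Suc k)
  have t: "0 < t" by fact
  define K where "K = real k + (real k + 1) * (2 / t) + \<bar>gg t 1\<bar>"
  have K0: "0 \<le> K" unfolding K_def using t by auto
  have WB: "good u \<Longrightarrow> \<bar>YY t k u - gg t 1\<bar> \<le> K" for u
    using YY_bound[of u t k] t unfolding K_def by (simp add: abs_diff_le_iff) linarith
  let ?W = "\<lambda>u. YY t k u - gg t 1"
  let ?C = "\<lambda>u. clampK K (YY t k u - gg t 1)"
  have Cm[measurable]: "?C \<in> borel_measurable kak_space" by measurable
  have Wm[measurable]: "?W \<in> borel_measurable kak_space" by measurable
  have AE1: "AE u in kak_space. (YY t (Suc k) u - gg t 1)\<^sup>2 = (?W u)\<^sup>2 + 2 * (?C u * Dk t k u) + (Dk t k u)\<^sup>2"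
    using AE_good YY_step_AE[OF t, of k]
  proof eventually_elim
    case (elim u)
    have C: "?C u = ?W u" using WB clampK_id elim by blast
    show ?case unfolding C using elim(2) by (simp add: power2_eq_square algebra_simps)
  qed
  have iW: "integrable kak_space (\<lambda>u. (?W u)\<^sup>2)"
  proof (rule integrable_bdd[where B="K\<^sup>2"])
    show "AE u in kak_space. \<bar>(?W u)\<^sup>2\<bar> \<le> K\<^sup>2"
      using AE_good
    proof eventually_elim
      case (elim u)
      have "\<bar>?W u\<bar> \<le> K" using WB elim .
      then have "\<bar>?W u\<bar>\<^sup>2 \<le> K\<^sup>2" by (intro power_mono) auto
      then show ?case by simp
    qed
  qed measurable
  have iC: "integrable kak_space (\<lambda>u. 2 * (?C u * Dk t k u))"
  proof (rule integrable_bdd[where B="2 * (K * 2)"])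
    show "AE u in kak_space. \<bar>2 * (?C u * Dk t k u)\<bar> \<le> 2 * (K * 2)"
    proof (intro AE_I2)
      fix u
      have "\<bar>?C u\<bar> * \<bar>Dk t k u\<bar> \<le> K * 2"
        using clampK_bound[OF K0] Dk_bound[OF t] K0 by (intro mult_mono) auto
      then show "\<bar>2 * (?C u * Dk t k u)\<bar> \<le> 2 * (K * 2)" by (simp add: abs_mult mult.commute)
    qed
  qed measurable
  have iD: "integrable kak_space (\<lambda>u. (Dk t k u)\<^sup>2)"
  proof (rule integrable_bdd[where B=4])
    show "AE u in kak_space. \<bar>(Dk t k u)\<^sup>2\<bar> \<le> 4"
      by (intro AE_I2) (use Dk_sq[OF t] in \<open>force split: if_splits\<close>)
  qed measurable
  have iI: "integrable kak_space (\<lambda>u. 4 * (if t \<le> kak_max k u then 1 else 0 :: real))"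
    by (rule integrable_bdd[where B=4]) (auto intro!: AE_I2)
  have "(\<integral>u. (YY t (Suc k) u - gg t 1)\<^sup>2 \<partial>kak_space)
      = (\<integral>u. (?W u)\<^sup>2 + 2 * (?C u * Dk t k u) + (Dk t k u)\<^sup>2 \<partial>kak_space)"
    by (rule integral_cong_AE) (auto simp: AE1)
  also have "\<dots> = (\<integral>u. (?W u)\<^sup>2 \<partial>kak_space) + (\<integral>u. 2 * (?C u * Dk t k u) \<partial>kak_space) + (\<integral>u. (Dk t k u)\<^sup>2 \<partial>kak_space)"
    using iW iC iD by simp
  also have "(\<integral>u. 2 * (?C u * Dk t k u) \<partial>kak_space) = 2 * (\<integral>u. ?C u * Dk t k u \<partial>kak_space)"
    by simp
  also have "(\<integral>u. ?C u * Dk t k u \<partial>kak_space) = 0"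
  proof (rule indep_phi[OF t Cm, where B=K])
    show "\<bar>clampK K (YY t k X - gg t 1)\<bar> \<le> K" for X by (rule clampK_bound[OF K0])
    show "clampK K (YY t k (X(Suc k := z)) - gg t 1) = clampK K (YY t k X - gg t 1)" for X z
      by (simp add: YY_loc)
  qed
  also have "(\<integral>u. (Dk t k u)\<^sup>2 \<partial>kak_space) \<le> (\<integral>u. 4 * (if t \<le> kak_max k u then 1 else 0 :: real) \<partial>kak_space)"
    by (rule integral_mono[OF iD iI]) (rule Dk_sq[OF t])
  also have "(\<integral>u. (?W u)\<^sup>2 \<partial>kak_space) \<le> 4 * (\<integral>u. AA t k u \<partial>kak_space)"
    using Suc by simp
  finally have "(\<integral>u. (YY t (Suc k) u - gg t 1)\<^sup>2 \<partial>kak_space)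
     \<le> 4 * (\<integral>u. AA t k u \<partial>kak_space) + (\<integral>u. 4 * (if t \<le> kak_max k u then 1 else 0 :: real) \<partial>kak_space)"
    by simp
  also have "\<dots> = 4 * (\<integral>u. AA t (Suc k) u \<partial>kak_space)"
  proof -
    have iA: "integrable kak_space (AA t k)"
      by (rule integrable_bdd[where B="real k"]) (use AA_bounds in \<open>auto intro!: AE_I2\<close>)
    have iI': "integrable kak_space (\<lambda>u. (if t \<le> kak_max k u then 1 else 0 :: real))"
      by (rule integrable_bdd[where B=1]) (auto intro!: AE_I2)
    have "(\<integral>u. AA t (Suc k) u \<partial>kak_space) = (\<integral>u. AA t k u \<partial>kak_space) + (\<integral>u. (if t \<le> kak_max k u then 1 else 0 :: real) \<partial>kak_space)"
      unfolding AA_Suc using iA iI' by simp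
    then show ?thesis by simp
  qed
  finally show ?case .
qed

lemma EAA: "0 < t \<Longrightarrow> (\<integral>u. AA t n u \<partial>kak_space) \<le> gg t 1"
proof -
  assume t: "0 < t"
  have iA: "integrable kak_space (AA t n)"
    by (rule integrable_bdd[where B="real n"]) (use AA_bounds in \<open>auto intro!: AE_I2\<close>)
  have "(\<integral>u. AA t n u \<partial>kak_space) \<le> (\<integral>u. YY t n u \<partial>kak_space)"
  proof (rule integral_mono_AE[OF iA YY_integrable[OF t]])
    show "AE u in kak_space. AA t n u \<le> YY t n u"
      using AE_good by eventually_elim (use GG_bounds t in \<open>auto simp: YY_def\<close>)
  qed
  then show ?thesis using EY[OF t] by simp
qed

lemma VAR2: "0 < t \<Longrightarrow> (\<integral>u. (YY t n u - gg t 1)\<^sup>2 \<partial>kak_space) \<le> 4 * gg t 1"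
  using VAR[of t n] EAA[of t n] by linarith

lemma W2_integrable: "0 < t \<Longrightarrow> integrable kak_space (\<lambda>u. (YY t n u - gg t 1)\<^sup>2)"
proof -
  assume t: "0 < t"
  define K where "K = real n + (real n + 1) * (2 / t) + \<bar>gg t 1\<bar>"
  have WB: "good u \<Longrightarrow> \<bar>YY t n u - gg t 1\<bar> \<le> K" for u
    using YY_bound[of u t n] t unfolding K_def by (simp add: abs_diff_le_iff) linarith
  show ?thesis
  proof (rule integrable_bdd[where B="K\<^sup>2"])
    show "AE u in kak_space. \<bar>(YY t n u - gg t 1)\<^sup>2\<bar> \<le> K\<^sup>2"
      using AE_good
    proof eventually_elim
      case (elim u)
      have "\<bar>YY t n u - gg t 1\<bar> \<le> K" using WB elim .
      then have "\<bar>YY t n u - gg t 1\<bar>\<^sup>2 \<le> K\<^sup>2" by (intro power_mono) auto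
      then show ?case by simp
    qed
  qed measurable
qed

lemma cheb:
  assumes t: "0 < t" and c: "0 < c"
    and P[measurable]: "Measurable.pred kak_space P"
    and AEP: "AE u in kak_space. P u \<longrightarrow> c \<le> \<bar>YY t n u - gg t 1\<bar>"
  shows "(\<integral>u. (if P u then 1 else 0 :: real) \<partial>kak_space) \<le> 4 * gg t 1 / c\<^sup>2"
proof -
  have iI: "integrable kak_space (\<lambda>u. (if P u then 1 else 0 :: real))"
    by (rule integrable_bdd[where B=1]) (auto intro!: AE_I2)
  have iW: "integrable kak_space (\<lambda>u. (YY t n u - gg t 1)\<^sup>2 / c\<^sup>2)"
    using W2_integrable[OF t, of n] by simp
  have "(\<integral>u. (if P u then 1 else 0 :: real) \<partial>kak_space) \<le> (\<integral>u. (YY t n u - gg t 1)\<^sup>2 / c\<^sup>2 \<partial>kak_space)"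
  proof (rule integral_mono_AE[OF iI iW])
    show "AE u in kak_space. (if P u then 1 else 0) \<le> (YY t n u - gg t 1)\<^sup>2 / c\<^sup>2"
      using AEP
    proof eventually_elim
      case (elim u)
      show ?case
      proof (cases "P u")
        case True
        then have "c \<le> \<bar>YY t n u - gg t 1\<bar>" using elim by blast
        then have "c\<^sup>2 \<le> \<bar>YY t n u - gg t 1\<bar>\<^sup>2" using c by (intro power_mono) auto
        then show ?thesis using True c by simp
      qed simp
    qed
  qed
  also have "\<dots> = (\<integral>u. (YY t n u - gg t 1)\<^sup>2 \<partial>kak_space) / c\<^sup>2" by simp
  also have "\<dots> \<le> 4 * gg t 1 / c\<^sup>2" using VAR2[OF t, of n] c by (intro divide_right_mono) auto
  finally show ?thesis .
qed

lemma AA_full: "good u \<Longrightarrow> t \<le> kak_max n u \<Longrightarrow> AA t n u = real n"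
proof -
  assume g: "good u" and M: "t \<le> kak_max n u"
  have "AA t n u = (\<Sum>j<n. 1)" unfolding AA_def
    using M kak_max_antimono[OF g] by (intro sum.cong) (auto intro: order_trans)
  then show ?thesis by simp
qed

lemma sum_list_zero_aux: "\<forall>x\<in>set xs. f x = (0::real) \<Longrightarrow> sum_list (map f xs) = 0"
  by (induction xs) auto

lemma GG_zero: "good u \<Longrightarrow> kak_max n u < t \<Longrightarrow> GG t (kak_lengths u n) = 0"
proof -
  assume g: "good u" and M: "kak_max n u < t"
  have "\<forall>x\<in>set (kak_lengths u n). gg t x = 0"
    using M kak_le_max by (fastforce simp: gg_def)
  then show ?thesis unfolding GG_def by (rule sum_list_zero_aux)
qed

lemma gg1: "0 < t \<Longrightarrow> t \<le> 1 \<Longrightarrow> gg t 1 = 2 / t - 1"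
  by (simp add: gg_def)

lemma arith_up: "0 < (n::real) \<Longrightarrow> 0 < x \<Longrightarrow> 4 * (2 / ((2 + x) / n)) / (n * x / (2 + x))\<^sup>2 = 8 * (2 + x) / (n * x\<^sup>2)"
proof -
  assume n: "0 < n" and x: "0 < x"
  define y where "y = 2 + x"
  have y: "0 < y" using x by (simp add: y_def)
  have "4 * (2 / (y / n)) / (n * x / y)\<^sup>2 = 8 * y / (n * x\<^sup>2)"
    using n x y by (simp add: field_simps power2_eq_square)
  then show ?thesis by (simp add: y_def)
qed

lemma upper_tail:
  assumes n: "1 \<le> n" and x: "0 < x"
  shows "(\<integral>u. (if x < real n * kak_max n u - 2 then 1 else 0 :: real) \<partial>kak_space) \<le> 8 * (2 + x) / (real n * x\<^sup>2)"
proof -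
  define t where "t = (2 + x) / real n"
  have t0: "0 < t" using n x by (simp add: t_def)
  have iI: "integrable kak_space (\<lambda>u. (if x < real n * kak_max n u - 2 then 1 else 0 :: real))"
    by (rule integrable_bdd[where B=1]) (auto intro!: AE_I2)
  have rhs0: "0 \<le> 8 * (2 + x) / (real n * x\<^sup>2)" using x by simp
  show ?thesis
  proof (cases "1 < t")
    case True
    have "(\<integral>u. (if x < real n * kak_max n u - 2 then 1 else 0 :: real) \<partial>kak_space) = (\<integral>u. 0 \<partial>kak_space)"
    proof (rule integral_cong_AE)
      show "AE u in kak_space. (if x < real n * kak_max n u - 2 then 1 else 0 :: real) = 0"
        using AE_good
      proof eventually_elim
        case (elim u)
        have "kak_max n u \<le> 1" using kak_max_bounds[OF elim] by blast
        then have "real n * kak_max n u \<le> real n" using n by (simp add: mult_left_le_one_le kak_max_bounds[OF elim])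
        moreover have "real n < 2 + x" using True n by (simp add: t_def field_simps)
        ultimately show ?case by auto
      qed
    qed auto
    then show ?thesis using rhs0 by simp
  next
    case False
    define c where "c = real n * x / (2 + x)"
    have c0: "0 < c" using n x by (simp add: c_def)
    have "(\<integral>u. (if x < real n * kak_max n u - 2 then 1 else 0 :: real) \<partial>kak_space) \<le> 4 * gg t 1 / c\<^sup>2"
    proof (rule cheb[OF t0 c0])
      show "AE u in kak_space. x < real n * kak_max n u - 2 \<longrightarrow> c \<le> \<bar>YY t n u - gg t 1\<bar>"
        using AE_good
      proof eventually_elim
        case (elim u)
        show ?case
        proof
          assume "x < real n * kak_max n u - 2"
          then have "t \<le> kak_max n u" using n by (simp add: t_def field_simps)
          then have A: "AA t n u = real n" by (rule AA_full[OF elim])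
          have "YY t n u \<ge> real n" unfolding YY_def A using GG_nonneg[OF t0] by simp
          moreover have "gg t 1 = 2 / t - 1" using False t0 by (simp add: gg1)
          moreover have "real n - (2 / t - 1) \<ge> c"
          proof -
            have "2 / t = 2 * real n / (2 + x)" using x by (simp add: t_def)
            moreover have "real n - 2 * real n / (2 + x) = c" using x by (simp add: c_def field_simps)
            ultimately show ?thesis by simp
          qed
          ultimately show "c \<le> \<bar>YY t n u - gg t 1\<bar>" by simp
        qed
      qed
    qed measurable
    also have "\<dots> \<le> 4 * (2 / t) / c\<^sup>2"
      using gg1[OF t0] False c0 t0 by (intro divide_right_mono mult_left_mono) auto
    also have "\<dots> = 8 * (2 + x) / (real n * x\<^sup>2)"
      unfolding t_def c_def by (rule arith_up) (use n x in auto)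
    finally show ?thesis .
  qed
qed

lemma arith_lo: "0 < (n::real) \<Longrightarrow> 0 < x \<Longrightarrow> x < 2 \<Longrightarrow> 4 * (2 / ((2 - x) / n)) / (n * x / (2 * (2 - x)))\<^sup>2 \<le> 64 / (n * x\<^sup>2)"
proof -
  assume n: "0 < n" and x: "0 < x" "x < 2"
  define y where "y = 2 - x"
  have y: "0 < y" "y \<le> 2" using x by (auto simp: y_def)
  have "4 * (2 / (y / n)) / (n * x / (2 * y))\<^sup>2 = 32 * y / (n * x\<^sup>2)"
    using n x y by (simp add: field_simps power2_eq_square)
  also have "\<dots> \<le> 64 / (n * x\<^sup>2)" using y n x by (intro divide_right_mono) auto
  finally show ?thesis by (simp add: y_def)
qed
lemma arith_lo2: "0 < (n::real) \<Longrightarrow> 0 < x \<Longrightarrow> x < 2 \<Longrightarrow> n * x < 4 \<Longrightarrow> 1 \<le> 64 / (n * x\<^sup>2)"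
proof -
  assume n: "0 < n" and x: "0 < x" "x < 2" and nx: "n * x < 4"
  have "n * x\<^sup>2 = (n * x) * x" by (simp add: power2_eq_square)
  also have "\<dots> \<le> 4 * 2" using nx x n by (intro mult_mono) auto
  finally have "n * x\<^sup>2 \<le> 64" by simp
  moreover have "0 < n * x\<^sup>2" using n x by simp
  ultimately show ?thesis by simp
qed
lemma arith_lo3: "0 < (n::real) \<Longrightarrow> 0 < x \<Longrightarrow> x < 2 \<Longrightarrow> 4 \<le> n * x \<Longrightarrow>
   n * x / (2 * (2 - x)) \<le> 2 / ((2 - x) / n) - 1 - n"
proof -
  assume n: "0 < n" and x: "0 < x" "x < 2" and nx: "4 \<le> n * x"
  define y where "y = 2 - x"
  have y: "0 < y" using x by (auto simp: y_def)
  have xe: "x = 2 - y" by (simp add: y_def)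
  have "2 / (y / n) - 1 - n - n * x / (2 * y) = (n * x + 2 * x - 4) / (2 * y)"
    using y unfolding xe by (simp add: field_simps)
  moreover have "0 \<le> (n * x + 2 * x - 4) / (2 * y)" using nx x y by simp
  ultimately show ?thesis unfolding y_def by linarith
qed

lemma lower_tail:
  assumes n: "2 \<le> n" and x: "0 < x"
  shows "(\<integral>u. (if real n * kak_max n u - 2 < - x then 1 else 0 :: real) \<partial>kak_space) \<le> 64 / (real n * x\<^sup>2)"
proof -
  interpret P: prob_space kak_space by (rule prob_space_kak)
  have iI: "integrable kak_space (\<lambda>u. (if real n * kak_max n u - 2 < - x then 1 else 0 :: real))"
    by (rule integrable_bdd[where B=1]) (auto intro!: AE_I2)
  have hn: "0 < real n" using n by simp
  have rhs0: "0 \<le> 64 / (real n * x\<^sup>2)" using x by simp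
  show ?thesis
  proof (cases "2 \<le> x")
    case True
    have "(\<integral>u. (if real n * kak_max n u - 2 < - x then 1 else 0 :: real) \<partial>kak_space) = (\<integral>u. 0 \<partial>kak_space)"
    proof (rule integral_cong_AE)
      show "AE u in kak_space. (if real n * kak_max n u - 2 < - x then 1 else 0 :: real) = 0"
        using AE_good
      proof eventually_elim
        case (elim u)
        have "0 \<le> real n * kak_max n u" using kak_max_bounds[OF elim] by simp
        then show ?case using True by auto
      qed
    qed auto
    then show ?thesis using rhs0 by simp
  next
    case False
    then have x2: "x < 2" by simp
    show ?thesis
    proof (cases "real n * x < 4")
      case True
      have "(\<integral>u. (if real n * kak_max n u - 2 < - x then 1 else 0 :: real) \<partial>kak_space) \<le> (\<integral>u. 1 \<partial>kak_space)"
        by (rule integral_mono[OF iI]) auto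
      also have "\<dots> = 1" by (simp add: P.prob_space)
      also have "\<dots> \<le> 64 / (real n * x\<^sup>2)" by (rule arith_lo2[OF hn x x2 True])
      finally show ?thesis .
    next
      case False
      then have nx: "4 \<le> real n * x" by simp
      define t where "t = (2 - x) / real n"
      have t0: "0 < t" using x2 hn by (simp add: t_def)
      have t1: "t \<le> 1"
      proof -
        have "2 - x \<le> real n" using n x by simp
        then show ?thesis using hn by (simp add: t_def)
      qed
      define c where "c = real n * x / (2 * (2 - x))"
      have c0: "0 < c" using hn x x2 by (simp add: c_def)
      have "(\<integral>u. (if real n * kak_max n u - 2 < - x then 1 else 0 :: real) \<partial>kak_space) \<le> 4 * gg t 1 / c\<^sup>2"
      proof (rule cheb[OF t0 c0])
        show "AE u in kak_space. real n * kak_max n u - 2 < - x \<longrightarrow> c \<le> \<bar>YY t n u - gg t 1\<bar>"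
          using AE_good
        proof eventually_elim
          case (elim u)
          show ?case
          proof
            assume "real n * kak_max n u - 2 < - x"
            then have "kak_max n u < t" using hn by (simp add: t_def field_simps)
            then have "GG t (kak_lengths u n) = 0" by (rule GG_zero[OF elim])
            then have "YY t n u \<le> real n" unfolding YY_def using AA_bounds[of t n u] by simp
            moreover have "gg t 1 = 2 / t - 1" using t0 t1 by (simp add: gg1)
            moreover have "c \<le> 2 / t - 1 - real n"
              unfolding c_def t_def by (rule arith_lo3[OF hn x x2 nx])
            ultimately show "c \<le> \<bar>YY t n u - gg t 1\<bar>" by simp
          qed
        qed
      qed measurable
      also have "\<dots> \<le> 4 * (2 / t) / c\<^sup>2"
        using gg1[OF t0 t1] c0 t0 by (intro divide_right_mono mult_left_mono) auto
      also have "\<dots> \<le> 64 / (real n * x\<^sup>2)"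
        unfolding t_def c_def by (rule arith_lo[OF hn x x2])
      finally show ?thesis .
    qed
  qed
qed

lemma grid:
  fixes d z :: real
  assumes d: "0 < d" and z: "0 \<le> z" "z \<le> real N * d"
  shows "z \<le> d + d * (\<Sum>j\<in>{1..N}. if real j * d < z then 1 else 0)"
proof (cases "z \<le> d")
  case True
  have "0 \<le> (\<Sum>j\<in>{1..N}. if real j * d < z then 1 else (0::real))" by (rule sum_nonneg) auto
  then show ?thesis using True d by (simp add: add_increasing2)
next
  case False
  define y where "y = z / d"
  have y1: "1 < y" using False d by (simp add: y_def field_simps)
  have yN: "y \<le> real N" using z d by (simp add: y_def field_simps)
  define m where "m = nat (\<lceil>y\<rceil> - 1)"
  have cy: "1 \<le> \<lceil>y\<rceil> - 1" using y1 by linarith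
  have mr: "real m = of_int \<lceil>y\<rceil> - 1" using cy by (simp add: m_def)
  have mge: "y - 1 \<le> real m" using mr ceiling_correct[of y] by linarith
  have jlt: "real j < y" if "j \<le> m" for j
  proof -
    have im: "int m = \<lceil>y\<rceil> - 1" using cy by (simp add: m_def)
    have "int j \<le> int m" using that by simp
    then have "int j < \<lceil>y\<rceil>" using im by linarith
    then show ?thesis by (simp add: less_ceiling_iff)
  qed
  have sub: "{1..m} \<subseteq> {1..N}"
  proof
    fix j assume "j \<in> {1..m}"
    then have "real j < y" using jlt by auto
    then have "real j < real N" using yN by linarith
    then show "j \<in> {1..N}" using \<open>j \<in> {1..m}\<close> by auto
  qed
  have "real m = (\<Sum>j\<in>{1..m}. if real j * d < z then 1 else (0::real))"
  proof -
    have "(\<Sum>j\<in>{1..m}. if real j * d < z then 1 else (0::real)) = (\<Sum>j\<in>{1..m}. 1)"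
    proof (rule sum.cong)
      fix j assume "j \<in> {1..m}"
      then have "real j < y" using jlt by auto
      then have "real j * d < z" using d by (simp add: y_def field_simps)
      then show "(if real j * d < z then 1 else (0::real)) = 1" by simp
    qed simp
    then show ?thesis by simp
  qed
  also have "\<dots> \<le> (\<Sum>j\<in>{1..N}. if real j * d < z then 1 else (0::real))"
    by (rule sum_mono2[OF _ sub]) auto
  finally have "real m \<le> (\<Sum>j\<in>{1..N}. if real j * d < z then 1 else (0::real))" .
  then have "d * (y - 1) \<le> d * (\<Sum>j\<in>{1..N}. if real j * d < z then 1 else (0::real))"
    using mge d by (intro mult_left_mono) auto
  moreover have "d * (y - 1) = z - d" using d by (simp add: y_def field_simps)
  ultimately show ?thesis by simp
qed

lemma sum_inv_sq: "1 \<le> N \<Longrightarrow> (\<Sum>j\<in>{1..N}. 1 / (real j)\<^sup>2) \<le> 2 - 1 / real N"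
proof (induction N rule: dec_induct)
  case base then show ?case by simp
next
  case (step N)
  have N: "1 \<le> real N" using step by simp
  have "(\<Sum>j\<in>{1..Suc N}. 1 / (real j)\<^sup>2) = (\<Sum>j\<in>{1..N}. 1 / (real j)\<^sup>2) + 1 / (real N + 1)\<^sup>2"
    by simp
  also have "\<dots> \<le> 2 - 1 / real N + 1 / (real N + 1)\<^sup>2" using step by simp
  also have "\<dots> \<le> 2 - 1 / real (Suc N)"
  proof -
    have "1 / (real N + 1)\<^sup>2 \<le> 1 / (real N * (real N + 1))"
      using N by (intro divide_left_mono) (auto simp: power2_eq_square intro!: mult_right_mono)
    also have "\<dots> = 1 / real N - 1 / (real N + 1)"
      using N by (simp add: field_simps)
    finally have "1 / (real N + 1)\<^sup>2 \<le> 1 / real N - 1 / (real N + 1)" .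
    moreover have "1 / real (Suc N) = 1 / (real N + 1)" by simp
    ultimately show ?thesis by linarith
  qed
  finally show ?case .
qed

lemma sum_inv: "1 \<le> N \<Longrightarrow> (\<Sum>j\<in>{1..N}. 1 / real j) \<le> ln (real N) + 1"
proof -
  assume N: "1 \<le> N"
  have "harm N - ln (real N) \<le> harm 1 - ln (real (1::nat))"
    by (rule euler_mascheroni_sequence_decreasing) (use N in auto)
  moreover have "harm 1 = (1::real)" by (simp add: harm_def)
  moreover have "harm N = (\<Sum>j\<in>{1..N}. 1 / real j)" by (simp add: harm_def divide_inverse)
  ultimately show ?thesis by simp
qed

lemma ln_le_sqrt: "1 \<le> n \<Longrightarrow> ln (real n) \<le> 2 * sqrt (real n)"
proof -
  assume n: "1 \<le> n"
  have s: "0 < sqrt (real n)" using n by simp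
  have "ln (real n) = 2 * ln (sqrt (real n))" using n by (simp add: ln_sqrt)
  also have "\<dots> \<le> 2 * (sqrt (real n) - 1)" using ln_le_minus_one[OF s] by simp
  finally show ?thesis by simp
qed


lemma main_bound:
  assumes n: "2 \<le> n"
  shows "sqrt (real n) * (\<integral>u. \<bar>real n * kak_max n u - 2\<bar> \<partial>kak_space) \<le> 201"
proof -
  interpret P: prob_space kak_space by (rule prob_space_kak)
  define d where "d = 1 / sqrt (real n)"
  define N where "N = n ^ 2"
  have hn: "1 \<le> real n" using n by simp
  have hn2: "2 \<le> real n" using n by simp
  have sq1: "1 \<le> sqrt (real n)" using hn by simp
  have d0: "0 < d" using n by (simp add: d_def)
  have d1: "d \<le> 1" using sq1 by (simp add: d_def)
  have dn: "real n * d\<^sup>2 = 1" using n by (simp add: d_def power_divide)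
  have sqd: "sqrt (real n) * d = 1" using n by (simp add: d_def)
  have N1: "1 \<le> N" using n by (simp add: N_def)
  have Nd: "real n \<le> real N * d"
  proof -
    have "real N * d = real n * (real n * d)" by (simp add: N_def power2_eq_square)
    also have "real n * d = sqrt (real n)" using n by (simp add: d_def real_div_sqrt)
    finally have "real N * d = real n * sqrt (real n)" .
    moreover have "real n \<le> real n * sqrt (real n)" using sq1 hn by simp
    ultimately show ?thesis by simp
  qed
  let ?Z = "\<lambda>u. real n * kak_max n u - 2"
  define Iu where "Iu = (\<lambda>(j::nat) u. (if real j * d < ?Z u then 1 else 0 :: real))"
  define Il where "Il = (\<lambda>(j::nat) u. (if ?Z u < - (real j * d) then 1 else 0 :: real))"
  have Ium[measurable]: "Iu j \<in> borel_measurable kak_space" for j unfolding Iu_def by measurable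
  have Ilm[measurable]: "Il j \<in> borel_measurable kak_space" for j unfolding Il_def by measurable
  have iIu: "integrable kak_space (Iu j)" for j
    by (rule integrable_bdd[where B=1]) (auto intro!: AE_I2 simp: Iu_def)
  have iIl: "integrable kak_space (Il j)" for j
    by (rule integrable_bdd[where B=1]) (auto intro!: AE_I2 simp: Il_def)
  let ?S = "\<lambda>u. d + d * (\<Sum>j\<in>{1..N}. Iu j u + Il j u)"
  have iS: "integrable kak_space ?S"
    using iIu iIl by auto
  have iZ: "integrable kak_space (\<lambda>u. \<bar>?Z u\<bar>)"
  proof (rule integrable_bdd[where B="real n"])
    show "AE u in kak_space. \<bar>\<bar>?Z u\<bar>\<bar> \<le> real n"
      using AE_good
    proof eventually_elim
      case (elim u)
      have "0 \<le> kak_max n u" "kak_max n u \<le> 1" using kak_max_bounds[OF elim] by auto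
      then have "0 \<le> real n * kak_max n u" "real n * kak_max n u \<le> real n"
        using hn by (auto simp: mult_left_le_one_le)
      then show ?case unfolding abs_le_iff using hn2 by linarith
    qed
  qed measurable
  have ptw: "AE u in kak_space. \<bar>?Z u\<bar> \<le> ?S u"
    using AE_good
  proof eventually_elim
    case (elim u)
    have "0 \<le> kak_max n u" "kak_max n u \<le> 1" using kak_max_bounds[OF elim] by auto
    then have "0 \<le> real n * kak_max n u" "real n * kak_max n u \<le> real n"
      using hn by (auto simp: mult_left_le_one_le)
    then have Zn: "\<bar>?Z u\<bar> \<le> real n" unfolding abs_le_iff using hn2 by linarith
    have "\<bar>?Z u\<bar> \<le> d + d * (\<Sum>j\<in>{1..N}. if real j * d < \<bar>?Z u\<bar> then 1 else 0)"
      by (rule grid[OF d0]) (use Zn Nd in auto)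
    also have "\<dots> \<le> ?S u"
    proof -
      have "(\<Sum>j\<in>{1..N}. if real j * d < \<bar>?Z u\<bar> then 1 else (0::real)) \<le> (\<Sum>j\<in>{1..N}. Iu j u + Il j u)"
        by (rule sum_mono) (auto simp: Iu_def Il_def)
      then show ?thesis using d0 by simp
    qed
    finally show ?case .
  qed
  have "(\<integral>u. \<bar>?Z u\<bar> \<partial>kak_space) \<le> (\<integral>u. ?S u \<partial>kak_space)"
    by (rule integral_mono_AE[OF iZ iS ptw])
  also have "(\<integral>u. ?S u \<partial>kak_space) = d + d * (\<Sum>j\<in>{1..N}. (\<integral>u. Iu j u \<partial>kak_space) + (\<integral>u. Il j u \<partial>kak_space))"
  proof -
    have "(\<integral>u. ?S u \<partial>kak_space) = (\<integral>u. d \<partial>kak_space) + (\<integral>u. d * (\<Sum>j\<in>{1..N}. Iu j u + Il j u) \<partial>kak_space)"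
      using iIu iIl by (intro Bochner_Integration.integral_add) auto
    also have "(\<integral>u. d \<partial>kak_space) = d" by (simp add: P.prob_space)
    also have "(\<integral>u. d * (\<Sum>j\<in>{1..N}. Iu j u + Il j u) \<partial>kak_space) = d * (\<integral>u. (\<Sum>j\<in>{1..N}. Iu j u + Il j u) \<partial>kak_space)"
      by simp
    also have "(\<integral>u. (\<Sum>j\<in>{1..N}. Iu j u + Il j u) \<partial>kak_space) = (\<Sum>j\<in>{1..N}. (\<integral>u. Iu j u + Il j u \<partial>kak_space))"
      using iIu iIl by (intro Bochner_Integration.integral_sum) auto
    also have "\<dots> = (\<Sum>j\<in>{1..N}. (\<integral>u. Iu j u \<partial>kak_space) + (\<integral>u. Il j u \<partial>kak_space))"
      using iIu iIl by (intro sum.cong refl Bochner_Integration.integral_add) auto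
    finally show ?thesis .
  qed
  also have "\<dots> \<le> d + d * (\<Sum>j\<in>{1..N}. 80 * (1 / (real j)\<^sup>2) + 8 * d * (1 / real j))"
  proof -
    have "(\<integral>u. Iu j u \<partial>kak_space) + (\<integral>u. Il j u \<partial>kak_space) \<le> 80 * (1 / (real j)\<^sup>2) + 8 * d * (1 / real j)"
      if j: "j \<in> {1..N}" for j
    proof -
      have j0: "0 < real j" using j by auto
      have x0: "0 < real j * d" using j0 d0 by simp
      have e: "real n * (real j * d)\<^sup>2 = (real j)\<^sup>2"
        using dn by (simp add: power_mult_distrib)
      have "(\<integral>u. Iu j u \<partial>kak_space) \<le> 8 * (2 + real j * d) / (real n * (real j * d)\<^sup>2)"
        unfolding Iu_def by (rule upper_tail) (use n x0 in auto)
      also have "\<dots> = 16 * (1 / (real j)\<^sup>2) + 8 * d * (1 / real j)"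
        unfolding e using j0 by (simp add: field_simps power2_eq_square)
      finally have A: "(\<integral>u. Iu j u \<partial>kak_space) \<le> 16 * (1 / (real j)\<^sup>2) + 8 * d * (1 / real j)" .
      have "(\<integral>u. Il j u \<partial>kak_space) \<le> 64 / (real n * (real j * d)\<^sup>2)"
        unfolding Il_def by (rule lower_tail[OF n x0])
      also have "\<dots> = 64 * (1 / (real j)\<^sup>2)" unfolding e by simp
      finally have B: "(\<integral>u. Il j u \<partial>kak_space) \<le> 64 * (1 / (real j)\<^sup>2)" .
      show ?thesis using A B by simp
    qed
    then have "(\<Sum>j\<in>{1..N}. (\<integral>u. Iu j u \<partial>kak_space) + (\<integral>u. Il j u \<partial>kak_space))
             \<le> (\<Sum>j\<in>{1..N}. 80 * (1 / (real j)\<^sup>2) + 8 * d * (1 / real j))"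
      by (rule sum_mono)
    then show ?thesis using d0 by simp
  qed
  also have "(\<Sum>j\<in>{1..N}. 80 * (1 / (real j)\<^sup>2) + 8 * d * (1 / real j))
      = 80 * (\<Sum>j\<in>{1..N}. 1 / (real j)\<^sup>2) + 8 * d * (\<Sum>j\<in>{1..N}. 1 / real j)"
    by (simp add: sum.distrib sum_distrib_left)
  also have "\<dots> \<le> 80 * 2 + 8 * d * (4 * sqrt (real n) + 1)"
  proof -
    have s1: "(\<Sum>j\<in>{1..N}. 1 / (real j)\<^sup>2) \<le> 2"
      using sum_inv_sq[OF N1] N1 by (smt (verit) of_nat_0_le_iff divide_nonneg_nonneg)
    have "(\<Sum>j\<in>{1..N}. 1 / real j) \<le> ln (real N) + 1" by (rule sum_inv[OF N1])
    also have "ln (real N) = 2 * ln (real n)" using n by (simp add: N_def ln_realpow)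
    also have "2 * ln (real n) \<le> 4 * sqrt (real n)" using ln_le_sqrt[of n] n by simp
    finally have s2: "(\<Sum>j\<in>{1..N}. 1 / real j) \<le> 4 * sqrt (real n) + 1" by simp
    show ?thesis using s1 s2 d0 by (intro add_mono mult_left_mono) auto
  qed
  finally have I: "(\<integral>u. \<bar>?Z u\<bar> \<partial>kak_space) \<le> d + d * (80 * 2 + 8 * d * (4 * sqrt (real n) + 1))"
    using d0 by (simp add: mult_left_mono)
  have "sqrt (real n) * (\<integral>u. \<bar>?Z u\<bar> \<partial>kak_space) \<le> sqrt (real n) * (d + d * (80 * 2 + 8 * d * (4 * sqrt (real n) + 1)))"
    using I sq1 by (intro mult_left_mono) auto
  also have "\<dots> = (sqrt (real n) * d) * (1 + (80 * 2 + 8 * d * (4 * sqrt (real n) + 1)))"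
    by (simp add: algebra_simps)
  also have "\<dots> = 1 + 160 + 8 * d * (4 * sqrt (real n) + 1)"
    using sqd by simp
  also have "8 * d * (4 * sqrt (real n) + 1) = 32 * (sqrt (real n) * d) + 8 * d"
    by (simp add: algebra_simps)
  also have "\<dots> = 32 + 8 * d" using sqd by simp
  also have "1 + 160 + (32 + 8 * d) \<le> (201::real)" using d1 by simp
  finally show ?thesis .
qed

lemma n1_bound: "(\<integral>u. \<bar>real 1 * kak_max 1 u - 2\<bar> \<partial>kak_space) \<le> 2"
proof -
  interpret P: prob_space kak_space by (rule prob_space_kak)
  have AEb: "AE u in kak_space. \<bar>real 1 * kak_max 1 u - 2\<bar> \<le> 2"
    using AE_good
  proof eventually_elim
    case (elim u)
    show ?case using kak_max_bounds[OF elim, of 1] by auto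
  qed
  have iZ: "integrable kak_space (\<lambda>u. \<bar>real 1 * kak_max 1 u - 2\<bar>)"
    by (rule integrable_bdd[where B=2]) (use AEb in auto)
  have "(\<integral>u. \<bar>real 1 * kak_max 1 u - 2\<bar> \<partial>kak_space) \<le> (\<integral>u. 2 \<partial>kak_space)"
    by (rule integral_mono_AE[OF iZ _ AEb]) simp
  then show ?thesis by (simp add: P.prob_space)
qed

theorem lemma2p4:
  shows "\<exists>B0::real. \<forall>n::nat.
           sqrt (real n) * (\<integral>u. \<bar>real n * kak_max n u - 2\<bar> \<partial>kak_space) \<le> B0"
proof (intro exI allI)
  fix n :: nat
  show "sqrt (real n) * (\<integral>u. \<bar>real n * kak_max n u - 2\<bar> \<partial>kak_space) \<le> 201"
  proof (cases "2 \<le> n")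
    case True then show ?thesis by (rule main_bound)
  next
    case False
    then consider "n = 0" | "n = 1" by linarith
    then show ?thesis
    proof cases
      case 1 then show ?thesis by simp
    next
      case 2 then show ?thesis using n1_bound by simp
    qed
  qed
qed

end
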